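(* Let $G$ be a simple graph with $m\ge 1$ edges and let $G'$ be an induced subgraph of $G$ formed by some blocks of $G$, with $m'\ge1$ edges. Then $\lambda_i(G)\ge\lambda_i(G')\ge\lambda_{m-m'+i}(G)$ for every $1\le i\le m'$.
   Context: A block of $G$ is a maximal connected induced subgraph without cut vertices. For an oriented edge $e$ write $e^-$ for its tail and $e^+$ for its head. For distinct edges $e,e'$: $e\leftrightarrow e'$ means $e^+=e'^-$ or $e'^+=e^-$; $e\overset{\pm}{\sim}e'$ means $e^+=e'^+$ or $e^-=e'^-$; $e\vartriangle e'$ means $e,e'$ are two edges of a common triangle. $\triangle(e)$ is the number of triangles containing $e$ in the graph under consideration. The Helmholtzian matrix $\mathcal{H}(G)=(h_{ee'})$ is indexed by edges, with $h_{ee}=\triangle(e)+2$, and for $e\ne e'$: $h_{ee'}=-1$ if $e\leftrightarrow e'$ and not $e\vartriangle e'$; $h_{ee'}=1$ if $e\overset{\pm}{\sim}e'$ and not $e\vartriangle e'$; $h_{ee'}=0$ otherwise. $\lambda_1(G)\ge\cdots\ge\lambda_m(G)$ are the eigenvalues of $\mathcal{H}(G)$ for an arbitrary edge orientation (independent of the orientation). *)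

theory Defs
  imports "Jordan_Normal_Form.Char_Poly" "HOL-Computational_Algebra.Polynomial" "HOL-Library.Product_Lexorder"
begin

definition simple_graph :: "'a set \<Rightarrow> 'a set set \<Rightarrow> bool" where
  "simple_graph V E \<longleftrightarrow> finite V \<and> (\<forall>e\<in>E. e \<subseteq> V \<and> card e = 2)"

definition connected_on :: "'a set set \<Rightarrow> 'a set \<Rightarrow> bool" where
  "connected_on E S \<longleftrightarrow> S \<noteq> {} \<and>
     (\<forall>x\<in>S. \<forall>y\<in>S. (x, y) \<in> {(u, v). u \<in> S \<and> v \<in> S \<and> {u, v} \<in> E}\<^sup>*)"

definition no_cut_vertex :: "'a set set \<Rightarrow> 'a set \<Rightarrow> bool" where
  "no_cut_vertex E S \<longleftrightarrow> (\<forall>v\<in>S. S - {v} \<noteq> {} \<longrightarrow> connected_on E (S - {v}))"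

definition is_block :: "'a set \<Rightarrow> 'a set set \<Rightarrow> 'a set \<Rightarrow> bool" where
  "is_block V E B \<longleftrightarrow> B \<subseteq> V \<and> connected_on E B \<and> no_cut_vertex E B \<and>
     (\<forall>T. B \<subset> T \<and> T \<subseteq> V \<longrightarrow> \<not> (connected_on E T \<and> no_cut_vertex E T))"

definition induced_edges :: "'a set set \<Rightarrow> 'a set \<Rightarrow> 'a set set" where
  "induced_edges E S = {e \<in> E. e \<subseteq> S}"

text \<open>Oriented edges: each edge {u,v} with u < v is oriented u \<rightarrow> v (the spectrum
  does not depend on the orientation).\<close>
definition oriented_edges :: "('a::linorder) set set \<Rightarrow> ('a \<times> 'a) set" where
  "oriented_edges E = {(u, v). {u, v} \<in> E \<and> u < v}"

definition is_triangle :: "'a set set \<Rightarrow> 'a set \<Rightarrow> bool" where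
  "is_triangle E t \<longleftrightarrow> card t = 3 \<and> (\<forall>x\<in>t. \<forall>y\<in>t. x \<noteq> y \<longrightarrow> {x, y} \<in> E)"

definition tri_count :: "'a set set \<Rightarrow> 'a \<times> 'a \<Rightarrow> nat" where
  "tri_count E e = card {t. is_triangle E t \<and> fst e \<in> t \<and> snd e \<in> t}"

definition in_common_triangle :: "'a set set \<Rightarrow> 'a \<times> 'a \<Rightarrow> 'a \<times> 'a \<Rightarrow> bool" where
  "in_common_triangle E e e' \<longleftrightarrow>
     (\<exists>t. is_triangle E t \<and> {fst e, snd e} \<subseteq> t \<and> {fst e', snd e'} \<subseteq> t)"

text \<open>Entries of the Helmholtzian (tail = fst, head = snd).\<close>
definition helm_entry :: "'a set set \<Rightarrow> 'a \<times> 'a \<Rightarrow> 'a \<times> 'a \<Rightarrow> real" where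
  "helm_entry E e e' =
     (if e = e' then real (tri_count E e) + 2
      else if (snd e = fst e' \<or> snd e' = fst e) \<and> \<not> in_common_triangle E e e' then -1
      else if (snd e = snd e' \<or> fst e = fst e') \<and> \<not> in_common_triangle E e e' then 1
      else 0)"

definition edge_list :: "('a::linorder) set set \<Rightarrow> ('a \<times> 'a) list" where
  "edge_list E = sorted_list_of_set (oriented_edges E)"

definition helmholtzian :: "('a::linorder) set set \<Rightarrow> real mat" where
  "helmholtzian E = (let es = edge_list E in
     mat (length es) (length es) (\<lambda>(i, j). helm_entry E (es ! i) (es ! j)))"

text \<open>Eigenvalues (with algebraic multiplicity) in non-increasing order; lambda E i for i \<ge> 1.\<close>
definition eigs_desc :: "('a::linorder) set set \<Rightarrow> real list" where
  "eigs_desc E = rev (sorted_list_of_multiset (proots (char_poly (helmholtzian E))))"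

definition helm_lambda :: "('a::linorder) set set \<Rightarrow> nat \<Rightarrow> real" where
  "helm_lambda E i = eigs_desc E ! (i - 1)"

end

theory Submission
  imports Defs "HOL-Combinatorics.Permutations"
begin

lemma mult_entry:
  assumes "A \<in> carrier_mat n m" "B \<in> carrier_mat m p" "i < n" "j < p"
  shows "(A * B) $$ (i,j) = (\<Sum>t<m. A $$ (i,t) * B $$ (t,j))"
  using assms by (simp add: scalar_prod_def atLeast0LessThan)

lemma mult_vec_entry:
  assumes "A \<in> carrier_mat n m" "v \<in> carrier_vec m" "i < n"
  shows "(A *\<^sub>v v) $ i = (\<Sum>t<m. A $$ (i,t) * v $ t)"
  using assms by (simp add: scalar_prod_def atLeast0LessThan)

lemma sprod_entry:
  assumes "v \<in> carrier_vec n" "w \<in> carrier_vec n"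
  shows "v \<bullet> w = (\<Sum>t<n. v $ t * w $ t)"
  using assms by (simp add: scalar_prod_def atLeast0LessThan)

definition symm :: "real mat \<Rightarrow> nat \<Rightarrow> bool" where
  "symm A n \<longleftrightarrow> A \<in> carrier_mat n n \<and> (\<forall>i<n. \<forall>j<n. A $$ (i,j) = A $$ (j,i))"

lemma real_eigenvalue:
  fixes A :: "real mat"
  assumes S: "symm A n" and n: "n > 0"
  shows "\<exists>e. eigenvalue A e"
proof -
  have A: "A \<in> carrier_mat n n" and sym: "\<And>i j. i<n \<Longrightarrow> j<n \<Longrightarrow> A$$(i,j) = A$$(j,i)"
    using S unfolding symm_def by auto
  let ?C = "map_mat complex_of_real A"
  have C: "?C \<in> carrier_mat n n" using A by simp
  obtain as where cp: "char_poly ?C = (\<Prod>a\<leftarrow>as. [:-a,1:])" and len: "length as = n"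
    using char_poly_factorized[OF C] by blast
  define z where "z = hd as"
  have "z \<in> set as" using len n unfolding z_def by (cases as) auto
  hence "poly (char_poly ?C) z = 0" unfolding cp by (force simp: poly_prod_list prod_list_zero_iff)
  hence "eigenvalue ?C z" using eigenvalue_root_char_poly[OF C] by simp
  then obtain v where ev: "eigenvector ?C v z" unfolding eigenvalue_def by blast
  hence v: "v \<in> carrier_vec n" "v \<noteq> 0\<^sub>v n" "?C *\<^sub>v v = z \<cdot>\<^sub>v v" using C unfolding eigenvector_def by auto
  define s where "s = (\<Sum>i<n. cnj (v$i) * (\<Sum>j<n. complex_of_real (A$$(i,j)) * v$j))"
  define N where "N = (\<Sum>i<n. cnj (v$i) * v$i)"
  have row: "(\<Sum>j<n. complex_of_real (A$$(i,j)) * v$j) = z * v$i" if i: "i<n" for i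
  proof -
    have "(?C *\<^sub>v v) $ i = (\<Sum>j<n. complex_of_real (A$$(i,j)) * v$j)"
      using mult_vec_entry[OF C v(1) i] i A by simp
    also have "(?C *\<^sub>v v) $ i = z * v $ i" using v(3) i v(1) by simp
    finally show ?thesis by simp
  qed
  have sN: "s = z * N" unfolding s_def N_def using row by (simp add: sum_distrib_left mult_ac)
  have "cnj s = (\<Sum>i<n. \<Sum>j<n. v$i * (complex_of_real (A$$(i,j)) * cnj (v$j)))"
    unfolding s_def by (simp add: sum_distrib_left mult_ac)
  also have "\<dots> = (\<Sum>j<n. \<Sum>i<n. v$i * (complex_of_real (A$$(i,j)) * cnj (v$j)))" by (rule sum.swap)
  also have "\<dots> = s" unfolding s_def using sym by (auto simp: sum_distrib_left mult_ac intro!: sum.cong)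
  finally have cs: "cnj s = s" .
  have cw: "cnj w * w = complex_of_real ((cmod w)^2)" for w
    using complex_norm_square[of w] by (simp add: mult.commute)
  have Nr: "N = complex_of_real (\<Sum>i<n. (cmod (v$i))^2)" unfolding N_def of_real_sum
    by (rule sum.cong) (use cw in auto)
  obtain i where i: "i < n" "v $ i \<noteq> 0" using v(1,2) by (metis eq_vecI index_zero_vec(1,2) carrier_vecD)
  have pos: "(\<Sum>i<n. (cmod (v$i))^2) > 0"
    by (rule sum_pos2[of _ i]) (use i in auto)
  have "Im s = 0" using cs by (metis Im_complex_of_real cnj.simps(2) complex_cnj_complex_of_real complex_surj neg_equal_zero)
  hence "Im z * (\<Sum>i<n. (cmod (v$i))^2) = 0" using sN Nr by simp
  hence Imz: "Im z = 0" using pos by simp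
  have "poly (char_poly ?C) (complex_of_real (Re z)) = complex_of_real (poly (char_poly A) (Re z))"
    unfolding of_real_hom.char_poly_hom[OF A] by simp
  moreover have "complex_of_real (Re z) = z" using Imz by (simp add: complex_eq_iff)
  ultimately have "poly (char_poly A) (Re z) = 0" using \<open>poly (char_poly ?C) z = 0\<close> by simp
  thus ?thesis using eigenvalue_root_char_poly[OF A] by blast
qed

definition hu :: "real vec \<Rightarrow> nat \<Rightarrow> real" where
  "hu v i = (if i = 0 then 1 else 0) - v $ i"

definition hh :: "nat \<Rightarrow> real vec \<Rightarrow> real mat" where
  "hh n v = mat n n (\<lambda>(i,j). (if i = j then 1 else 0) - (2 / (\<Sum>t<n. (hu v t)^2)) * hu v i * hu v j)"

lemma hh_nn:
  assumes v: "v \<in> carrier_vec n" "v \<bullet> v = 1" and n: "0 < n"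
  shows "(\<Sum>t<n. (hu v t)^2) = 2 * hu v 0"
proof -
  have "(\<Sum>t<n. (hu v t)^2) = (\<Sum>t<n. (if t = 0 then 1 else 0) - 2 * (if t = 0 then v $ t else 0) + (v $ t)^2)"
    by (rule sum.cong) (auto simp: hu_def power2_eq_square algebra_simps)
  also have "\<dots> = 1 - 2 * v $ 0 + (\<Sum>t<n. (v $ t)^2)"
    using n by (simp add: sum.distrib sum_subtractf sum_distrib_left[symmetric])
  also have "(\<Sum>t<n. (v $ t)^2) = 1" using v by (simp add: sprod_entry[OF v(1) v(1), symmetric] power2_eq_square)
  finally show ?thesis by (simp add: hu_def)
qed

lemma hh_props:
  assumes v: "v \<in> carrier_vec n" "v \<bullet> v = 1" and n: "0 < n"
  shows "hh n v \<in> carrier_mat n n" "\<And>i j. i < n \<Longrightarrow> j < n \<Longrightarrow> hh n v $$ (i,j) = hh n v $$ (j,i)"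
    "hh n v * hh n v = 1\<^sub>m n" "\<And>i. i < n \<Longrightarrow> hh n v $$ (i,0) = v $ i"
proof -
  define nn where "nn = (\<Sum>t<n. (hu v t)^2)"
  define c where "c = 2 / nn"
  have nn: "nn = 2 * hu v 0" unfolding nn_def by (rule hh_nn[OF v n])
  have H: "\<And>i j. i < n \<Longrightarrow> j < n \<Longrightarrow> hh n v $$ (i,j) = (if i = j then 1 else 0) - c * hu v i * hu v j"
    unfolding hh_def c_def nn_def by simp
  show C: "hh n v \<in> carrier_mat n n" unfolding hh_def by simp
  show "\<And>i j. i < n \<Longrightarrow> j < n \<Longrightarrow> hh n v $$ (i,j) = hh n v $$ (j,i)" using H by simp
  have cnn: "c * c * nn = 2 * c"
  proof (cases "nn = 0")
    case True thus ?thesis unfolding c_def by simp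
  next
    case False thus ?thesis unfolding c_def by (simp add: field_simps)
  qed
  show "hh n v * hh n v = 1\<^sub>m n"
  proof (rule eq_matI)
    fix i j assume i: "i < dim_row (1\<^sub>m n)" and j: "j < dim_col (1\<^sub>m n)"
    hence i: "i < n" and j: "j < n" by auto
    have "(hh n v * hh n v) $$ (i,j) = (\<Sum>t<n. ((if i = t then 1 else 0) - c * hu v i * hu v t) * ((if t = j then 1 else 0) - c * hu v t * hu v j))"
      using mult_entry[OF C C i j] H i j by simp
    also have "\<dots> = (\<Sum>t<n. (if t = i then (if t = j then 1 else 0) else 0) - (if t = i then c * hu v t * hu v j else 0)
        - (if t = j then c * hu v i * hu v t else 0) + c * c * hu v i * hu v j * (hu v t)^2)"
      by (rule sum.cong) (auto simp: algebra_simps power2_eq_square)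
    also have "\<dots> = (if i = j then 1 else 0) - c * hu v i * hu v j - c * hu v i * hu v j + c * c * hu v i * hu v j * nn"
      using i j unfolding nn_def by (simp add: sum.distrib sum_subtractf sum_distrib_left[symmetric])
    also have "\<dots> = (if i = j then 1 else 0)"
      using arg_cong[OF cnn, of "\<lambda>x. x * (hu v i * hu v j)"] by (simp add: algebra_simps)
    finally show "(hh n v * hh n v) $$ (i,j) = 1\<^sub>m n $$ (i,j)" using i j by simp
  qed (use C in auto)
  show "\<And>i. i < n \<Longrightarrow> hh n v $$ (i,0) = v $ i"
  proof -
    fix i assume i: "i < n"
    show "hh n v $$ (i,0) = v $ i"
    proof (cases "nn = 0")
      case True
      have "(hu v i)^2 = 0"
      proof -
        have "(hu v i)^2 \<le> nn" unfolding nn_def by (rule member_le_sum) (use i in auto)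
        thus ?thesis using True by (simp add: order_antisym)
      qed
      hence "hu v i = 0" by simp
      thus ?thesis using H[OF i n] True unfolding c_def by (simp add: hu_def split: if_splits)
    next
      case False
      hence "c * hu v 0 = 1" unfolding c_def nn by simp
      have "hh n v $$ (i,0) = (if i = 0 then 1 else 0) - (c * hu v 0) * hu v i"
        using H[OF i n] by (simp add: mult_ac)
      thus ?thesis using \<open>c * hu v 0 = 1\<close> by (simp add: hu_def)
    qed
  qed
qed

definition orthonormal_sys :: "nat \<Rightarrow> (nat \<Rightarrow> real vec) \<Rightarrow> bool" where
  "orthonormal_sys n u \<longleftrightarrow> (\<forall>j<n. u j \<in> carrier_vec n) \<and> (\<forall>j<n. \<forall>l<n. u j \<bullet> u l = (if j = l then 1 else 0))"

lemma char_poly_1x1: "char_poly (mat 1 1 (\<lambda>_. e)) = [:- (e::real), 1:]"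
  by (simp add: char_poly_defs det_def sign_def)

lemma spectral:
  "symm A n \<Longrightarrow> \<exists>u es. length es = n \<and> orthonormal_sys n u \<and> (\<forall>j<n. A *\<^sub>v u j = es!j \<cdot>\<^sub>v u j)
     \<and> char_poly A = (\<Prod>e\<leftarrow>es. [:-e,1:])"
proof (induction n arbitrary: A)
  case 0
  hence A: "A \<in> carrier_mat 0 0" unfolding symm_def by auto
  have "char_poly A = (\<Prod>a\<leftarrow>diag_mat A. [:-a,1:])"
    by (rule char_poly_upper_triangular[OF A]) (use A in \<open>auto simp: upper_triangular_def\<close>)
  moreover have "diag_mat A = []" using A by (simp add: diag_mat_def)
  ultimately show ?case by (intro exI[of _ "\<lambda>_. 0\<^sub>v 0"] exI[of _ "[]"]) (auto simp: orthonormal_sys_def)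
next
  case (Suc k A)
  define n where "n = Suc k"
  have A: "A \<in> carrier_mat n n" and symA: "\<And>i j. i<n \<Longrightarrow> j<n \<Longrightarrow> A$$(i,j) = A$$(j,i)"
    using Suc.prems unfolding symm_def n_def by auto
  have n0: "0 < n" by (simp add: n_def)
  obtain e where "eigenvalue A e" using real_eigenvalue[OF Suc.prems] by auto
  then obtain w where w: "eigenvector A w e" unfolding eigenvalue_def by blast
  hence w: "w \<in> carrier_vec n" "w \<noteq> 0\<^sub>v n" "A *\<^sub>v w = e \<cdot>\<^sub>v w" using A unfolding eigenvector_def by auto
  obtain i0 where i0: "i0 < n" "w $ i0 \<noteq> 0" using w(1,2) by (metis eq_vecI index_zero_vec(1,2) carrier_vecD)
  have ww: "w \<bullet> w = (\<Sum>t<n. (w $ t)^2)" using sprod_entry[OF w(1) w(1)] by (simp add: power2_eq_square)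
  have wpos: "w \<bullet> w > 0" unfolding ww by (rule sum_pos2[of _ i0]) (use i0 in auto)
  define c where "c = 1 / sqrt (w \<bullet> w)"
  define v where "v = c \<cdot>\<^sub>v w"
  have v1: "v \<in> carrier_vec n" using w(1) unfolding v_def by simp
  have "v \<bullet> v = c * c * (w \<bullet> w)" unfolding v_def sprod_entry[OF w(1) w(1)]
    using sprod_entry[of "c \<cdot>\<^sub>v w" n "c \<cdot>\<^sub>v w"] w(1) by (simp add: sum_distrib_left mult_ac)
  also have "\<dots> = 1" unfolding c_def using wpos by (simp add: field_simps)
  finally have v2: "v \<bullet> v = 1" .
  have v3: "A *\<^sub>v v = e \<cdot>\<^sub>v v" unfolding v_def using mult_mat_vec[OF A w(1), of c] w(3)
    by (auto simp: mult.commute)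
  define H where "H = hh n v"
  note Hp = hh_props[OF v1 v2 n0, folded H_def]
  have HC: "H \<in> carrier_mat n n" by (rule Hp(1))
  have HT: "transpose_mat H = H" by (rule eq_matI) (use Hp in auto)
  have HH: "H * H = 1\<^sub>m n" by (rule Hp(3))
  define A' where "A' = H * A * H"
  have A'C: "A' \<in> carrier_mat n n" using HC A unfolding A'_def by auto
  have HA': "H * A' = A * H"
  proof -
    have "H * A' = (H * H) * (A * H)" unfolding A'_def using HC A
      by (subst assoc_mult_mat[of H n n H n "A*H" n]) auto
    thus ?thesis using HH HC A by simp
  qed
  have AHA: "A = H * A' * H"
  proof -
    have "H * A' * H = (A * H) * H" using HA' by simp
    also have "\<dots> = A * (H * H)" using HC A by simp
    finally show ?thesis using HH A by simp
  qed
  have simA: "similar_mat A A'" unfolding similar_mat_def similar_mat_wit_def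
    by (rule exI[of _ H], rule exI[of _ H]) (use A A'C HC HH AHA in auto)
  have colH: "col H 0 = v" by (rule eq_vecI) (use Hp(4) HC v1 in auto)
  have "col A' 0 = (H * A) *\<^sub>v col H 0" unfolding A'_def by (rule col_mult2) (use HC A n0 in auto)
  also have "\<dots> = H *\<^sub>v (A *\<^sub>v v)" unfolding colH using HC A v1 by simp
  also have "\<dots> = e \<cdot>\<^sub>v (H *\<^sub>v v)" unfolding v3 using mult_mat_vec[OF HC v1] by simp
  also have "H *\<^sub>v v = col (H * H) 0" using col_mult2[OF HC HC n0] colH by simp
  also have "\<dots> = unit_vec n 0" unfolding HH using n0 by simp
  finally have col0: "col A' 0 = e \<cdot>\<^sub>v unit_vec n 0" .
  have A'0: "A' $$ (i,0) = (if i = 0 then e else 0)" if "i < n" for i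
  proof -
    have "A' $$ (i,0) = col A' 0 $ i" using that A'C n0 by simp
    thus ?thesis unfolding col0 using that n0 by simp
  qed
  have AT: "transpose_mat A = A" by (rule eq_matI) (use A symA in auto)
  have "transpose_mat A' = transpose_mat H * transpose_mat (H * A)" unfolding A'_def
    using HC A by (simp add: transpose_mult[of _ n n _ n])
  also have "\<dots> = H * (A * H)" using HC A HT AT by (simp add: transpose_mult[of _ n n _ n])
  also have "\<dots> = A'" unfolding A'_def using HC A by simp
  finally have A'T: "transpose_mat A' = A'" .
  have symA': "A' $$ (i,j) = A' $$ (j,i)" if "i < n" "j < n" for i j
  proof -
    have "A' $$ (i,j) = transpose_mat A' $$ (i,j)" using A'T by simp
    thus ?thesis using that A'C by simp
  qed
  define A3 where "A3 = mat k k (\<lambda>(i,j). A' $$ (Suc i, Suc j))"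
  have symA3: "symm A3 k" unfolding symm_def A3_def using symA' by (auto simp: n_def)
  from Suc.IH[OF symA3] obtain u3 es3 where len3: "length es3 = k" and on3: "orthonormal_sys k u3"
    and ev3: "\<forall>j<k. A3 *\<^sub>v u3 j = es3!j \<cdot>\<^sub>v u3 j" and cp3: "char_poly A3 = (\<Prod>e\<leftarrow>es3. [:-e,1:])" by blast
  have blk: "A' = four_block_mat (mat 1 1 (\<lambda>_. e)) (0\<^sub>m 1 k) (0\<^sub>m k 1) A3"
  proof (rule eq_matI)
    fix i j assume "i < dim_row (four_block_mat (mat 1 1 (\<lambda>_. e)) (0\<^sub>m 1 k) (0\<^sub>m k 1) A3)"
      "j < dim_col (four_block_mat (mat 1 1 (\<lambda>_. e)) (0\<^sub>m 1 k) (0\<^sub>m k 1) A3)"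
    hence i: "i < n" and j: "j < n" by (auto simp: A3_def n_def)
    show "A' $$ (i,j) = four_block_mat (mat 1 1 (\<lambda>_. e)) (0\<^sub>m 1 k) (0\<^sub>m k 1) A3 $$ (i,j)"
    proof (cases "i = 0")
      case True
      thus ?thesis using A'0[OF j] symA'[OF i j] i j by (auto simp: A3_def n_def)
    next
      case False
      then obtain i' where i': "i = Suc i'" by (cases i) auto
      show ?thesis
      proof (cases "j = 0")
        case True thus ?thesis using A'0[OF i] i j i' by (auto simp: A3_def n_def)
      next
        case False
        then obtain j' where j': "j = Suc j'" by (cases j) auto
        show ?thesis using i j i' j' by (auto simp: A3_def n_def)
      qed
    qed
  qed (use A'C in \<open>auto simp: A3_def n_def\<close>)
  have "char_poly A' = char_poly (mat 1 1 (\<lambda>_. e)) * char_poly A3" unfolding blk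
    by (rule char_poly_four_block_zeros_col) (auto simp: A3_def)
  hence cp: "char_poly A = [:-e,1:] * char_poly A3"
    unfolding char_poly_similar[OF simA] char_poly_1x1 .
  define pad where "pad y = vec n (\<lambda>i. if i = 0 then 0 else y $ (i - 1))" for y :: "real vec"
  define zs where "zs j = (if j = 0 then unit_vec n 0 else pad (u3 (j - 1)))" for j
  define es where "es = e # es3"
  have u3C: "\<And>j. j < k \<Longrightarrow> u3 j \<in> carrier_vec k" using on3 unfolding orthonormal_sys_def by auto
  have zsC: "zs j \<in> carrier_vec n" for j unfolding zs_def pad_def by auto
  have sumn: "(\<Sum>t<n. f t) = f 0 + (\<Sum>t<k. f (Suc t))" for f :: "nat \<Rightarrow> real"
    unfolding n_def by (rule sum.lessThan_Suc_shift)
  have zs0: "zs j $ 0 = (if j = 0 then 1 else 0)" for j unfolding zs_def pad_def using n0 by auto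
  have zsS: "zs j $ Suc t = (if j = 0 then 0 else u3 (j - 1) $ t)" if "t < k" for j t
    unfolding zs_def pad_def using that by (auto simp: n_def)
  have onz: "orthonormal_sys n zs"
    unfolding orthonormal_sys_def
  proof (intro conjI allI impI)
    fix j l assume j: "j < n" and l: "l < n"
    have "zs j \<bullet> zs l = zs j $ 0 * zs l $ 0 + (\<Sum>t<k. zs j $ Suc t * zs l $ Suc t)"
      unfolding sprod_entry[OF zsC zsC] sumn ..
    also have "\<dots> = (if j = l then 1 else 0)"
    proof (cases "j = 0 \<or> l = 0")
      case True thus ?thesis using zs0 zsS by (auto simp: zs0)
    next
      case False
      have jl: "j - 1 < k" "l - 1 < k" using j l False by (auto simp: n_def)
      have "(\<Sum>t<k. zs j $ Suc t * zs l $ Suc t) = u3 (j - 1) \<bullet> u3 (l - 1)"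
        using False jl zsS u3C[of "j - 1"] u3C[of "l - 1"] j l sprod_entry[of "u3 (j - 1)" k "u3 (l - 1)"]
        by (simp add: n_def)
      also have "\<dots> = (if j = l then 1 else 0)" using on3 j l False unfolding orthonormal_sys_def n_def
        by auto
      finally show ?thesis using zs0 False by simp
    qed
    finally show "zs j \<bullet> zs l = (if j = l then 1 else 0)" .
  qed (rule zsC)
  have evz: "A' *\<^sub>v zs j = es!j \<cdot>\<^sub>v zs j" if j: "j < n" for j
  proof (rule eq_vecI)
    fix i assume "i < dim_vec (es!j \<cdot>\<^sub>v zs j)"
    hence i: "i < n" using zsC[of j] by (metis carrier_vecD index_smult_vec(2))
    have "(A' *\<^sub>v zs j) $ i = A' $$ (i,0) * zs j $ 0 + (\<Sum>t<k. A' $$ (i, Suc t) * zs j $ Suc t)"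
      unfolding mult_vec_entry[OF A'C zsC i] sumn ..
    also have "\<dots> = es!j * zs j $ i"
    proof (cases "j = 0")
      case True
      have s0: "(\<Sum>t<k. A' $$ (i, Suc t) * zs j $ Suc t) = 0" using zsS True by simp
      have zi: "zs j $ i = (if i = 0 then 1 else 0)" using True i by (simp add: zs_def)
      show ?thesis using s0 zi A'0[OF i] zs0 True by (simp add: es_def)
    next
      case False
      then obtain j' where j': "j = Suc j'" by (cases j) auto
      have j'k: "j' < k" using j j' by (simp add: n_def)
      show ?thesis
      proof (cases "i = 0")
        case True
        have "A' $$ (i, Suc t) = 0" if "t < k" for t using symA'[of i "Suc t"] A'0[of "Suc t"] that True
          by (simp add: n_def)
        thus ?thesis using True zs0 j' by simp
      next
        case False
        then obtain i' where i': "i = Suc i'" by (cases i) auto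
        have i'k: "i' < k" using i i' by (simp add: n_def)
        have "(\<Sum>t<k. A' $$ (i, Suc t) * zs j $ Suc t) = (\<Sum>t<k. A3 $$ (i', t) * u3 j' $ t)"
          by (rule sum.cong) (use zsS j' i' i'k in \<open>auto simp: A3_def\<close>)
        also have "\<dots> = (A3 *\<^sub>v u3 j') $ i'"
          using mult_vec_entry[of A3 k k "u3 j'" i'] u3C[OF j'k] i'k by (simp add: A3_def)
        also have "\<dots> = es3 ! j' * u3 j' $ i'" using ev3 j'k u3C[OF j'k] i'k by simp
        finally show ?thesis using zs0 zsS[OF i'k] j' i' by (simp add: es_def)
      qed
    qed
    finally show "(A' *\<^sub>v zs j) $ i = (es!j \<cdot>\<^sub>v zs j) $ i" using i zsC[of j] by (simp add: carrier_vecD)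
  qed (use A'C zsC[of j] in \<open>simp add: carrier_vecD\<close>)
  define u where "u j = H *\<^sub>v zs j" for j
  have uC: "u j \<in> carrier_vec n" for j unfolding u_def using HC zsC by simp
  have onu: "orthonormal_sys n u"
    unfolding orthonormal_sys_def
  proof (intro conjI allI impI)
    fix j l assume j: "j < n" and l: "l < n"
    have "u j \<bullet> u l = (transpose_mat H *\<^sub>v (H *\<^sub>v zs j)) \<bullet> zs l"
      unfolding u_def by (rule transpose_vec_mult_scalar[OF HC zsC, symmetric]) (use HC zsC in simp)
    also have "transpose_mat H *\<^sub>v (H *\<^sub>v zs j) = zs j" unfolding HT
      using HC zsC HH by (simp add: assoc_mult_mat_vec[symmetric])
    finally show "u j \<bullet> u l = (if j = l then 1 else 0)" using onz j l unfolding orthonormal_sys_def by simp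
  qed (rule uC)
  have evu: "A *\<^sub>v u j = es!j \<cdot>\<^sub>v u j" if j: "j < n" for j
  proof -
    have "A *\<^sub>v u j = (A * H) *\<^sub>v zs j" unfolding u_def using A HC zsC by simp
    also have "\<dots> = H *\<^sub>v (A' *\<^sub>v zs j)" unfolding HA'[symmetric] using A'C HC zsC by simp
    also have "\<dots> = es!j \<cdot>\<^sub>v u j" unfolding evz[OF j] u_def using mult_mat_vec[OF HC zsC] by simp
    finally show ?thesis .
  qed
  show ?case
    by (rule exI[of _ u], rule exI[of _ es]) (use len3 onu evu cp cp3 in \<open>auto simp: es_def n_def\<close>)
qed


definition eigs :: "real mat \<Rightarrow> real list" where
  "eigs A = rev (sorted_list_of_multiset (proots (char_poly A)))"

lemma proots_lin: "proots (\<Prod>e\<leftarrow>es. [:-e,1:]) = mset (es :: real list)"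
proof (induction es)
  case Nil thus ?case by simp
next
  case (Cons a es)
  have "(\<Prod>e\<leftarrow>es. [:-e,1:]) \<noteq> 0" by (auto simp: prod_list_zero_iff)
  hence "proots ([:-a,1:] * (\<Prod>e\<leftarrow>es. [:-e,1:])) = proots [:-a,1:] + proots (\<Prod>e\<leftarrow>es. [:-e,1:])"
    by (intro proots_mult) auto
  thus ?case using Cons by simp
qed

lemma spectral_sorted:
  assumes "symm A n"
  shows "\<exists>u. orthonormal_sys n u \<and> (\<forall>j<n. A *\<^sub>v u j = eigs A ! j \<cdot>\<^sub>v u j) \<and> length (eigs A) = n
    \<and> (\<forall>j l. j \<le> l \<longrightarrow> l < n \<longrightarrow> eigs A ! l \<le> eigs A ! j)"
proof -
  obtain u es where len: "length es = n" and on: "orthonormal_sys n u"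
    and ev: "\<forall>j<n. A *\<^sub>v u j = es!j \<cdot>\<^sub>v u j" and cp: "char_poly A = (\<Prod>e\<leftarrow>es. [:-e,1:])"
    using spectral[OF assms] by blast
  have eq: "eigs A = rev (sort es)" unfolding eigs_def cp proots_lin by simp
  have "mset (eigs A) = mset es" by (simp add: eq)
  then obtain p where p: "p permutes {..<length es}" "permute_list p es = eigs A"
    by (rule mset_eq_permutation)
  have pin: "j < n \<Longrightarrow> p j < n" for j using permutes_in_image[OF p(1)] len by auto
  have pinj: "p j = p l \<longleftrightarrow> j = l" for j l using permutes_inj[OF p(1)] by (auto dest: injD)
  have nth: "eigs A ! j = es ! (p j)" if "j < n" for j
    using p(2)[symmetric] that len permute_list_nth[OF p(1), of j] by simp
  have leng: "length (eigs A) = n" using eq len by simp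
  have sorted: "eigs A ! l \<le> eigs A ! j" if "j \<le> l" "l < n" for j l
  proof -
    have s: "sorted (sort es)" by simp
    have "eigs A ! l = sort es ! (n - Suc l)" "eigs A ! j = sort es ! (n - Suc j)"
      using that len by (auto simp: eq rev_nth)
    thus ?thesis using sorted_nth_mono[OF s, of "n - Suc l" "n - Suc j"] that len by simp
  qed
  show ?thesis
  proof (intro exI[of _ "u \<circ> p"] conjI allI impI)
    show "orthonormal_sys n (u \<circ> p)" using on pin pinj unfolding orthonormal_sys_def by auto
    show "A *\<^sub>v (u \<circ> p) j = eigs A ! j \<cdot>\<^sub>v (u \<circ> p) j" if "j < n" for j
      using ev pin[OF that] nth[OF that] by simp
  qed (use leng sorted in auto)
qed

definition lin :: "nat \<Rightarrow> (nat \<Rightarrow> real) \<Rightarrow> nat set \<Rightarrow> (nat \<Rightarrow> real vec) \<Rightarrow> real vec" where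
  "lin n c J u = vec n (\<lambda>r. \<Sum>j\<in>J. c j * u j $ r)"

lemma lin_carrier[simp]: "lin n c J u \<in> carrier_vec n" unfolding lin_def by simp

lemma lin_inner:
  assumes on: "orthonormal_sys n u" and J: "J \<subseteq> {..<n}"
  shows "lin n c J u \<bullet> lin n d J u = (\<Sum>j\<in>J. c j * d j)"
proof -
  have fin: "finite J" using J finite_subset by blast
  have "lin n c J u \<bullet> lin n d J u = (\<Sum>r<n. (\<Sum>j\<in>J. c j * u j $ r) * (\<Sum>l\<in>J. d l * u l $ r))"
    by (simp add: sprod_entry[of _ n] lin_def)
  also have "\<dots> = (\<Sum>r<n. \<Sum>j\<in>J. \<Sum>l\<in>J. c j * d l * (u j $ r * u l $ r))"
    by (simp add: sum_product mult_ac)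
  also have "\<dots> = (\<Sum>j\<in>J. \<Sum>r<n. \<Sum>l\<in>J. c j * d l * (u j $ r * u l $ r))" by (rule sum.swap)
  also have "\<dots> = (\<Sum>j\<in>J. \<Sum>l\<in>J. \<Sum>r<n. c j * d l * (u j $ r * u l $ r))"
    by (rule sum.cong[OF refl], rule sum.swap)
  also have "\<dots> = (\<Sum>j\<in>J. \<Sum>l\<in>J. c j * d l * (u j \<bullet> u l))"
  proof (rule sum.cong[OF refl], rule sum.cong[OF refl])
    fix j l assume "j \<in> J" "l \<in> J"
    hence "u j \<in> carrier_vec n" "u l \<in> carrier_vec n" using on J unfolding orthonormal_sys_def by auto
    thus "(\<Sum>r<n. c j * d l * (u j $ r * u l $ r)) = c j * d l * (u j \<bullet> u l)"
      by (simp add: sprod_entry sum_distrib_left)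
  qed
  also have "\<dots> = (\<Sum>j\<in>J. \<Sum>l\<in>J. if l = j then c j * d l else 0)"
  proof (intro sum.cong[OF refl])
    fix j l assume "j \<in> J" "l \<in> J"
    hence "j < n" "l < n" using J by auto
    thus "c j * d l * (u j \<bullet> u l) = (if l = j then c j * d l else 0)"
      using on unfolding orthonormal_sys_def by auto
  qed
  also have "\<dots> = (\<Sum>j\<in>J. c j * d j)" using fin by simp
  finally show ?thesis .
qed

lemma lin_eig:
  assumes A: "A \<in> carrier_mat n n" and on: "orthonormal_sys n u"
    and ev: "\<forall>j<n. A *\<^sub>v u j = a j \<cdot>\<^sub>v u j" and J: "J \<subseteq> {..<n}"
  shows "A *\<^sub>v lin n c J u = lin n (\<lambda>j. c j * a j) J u"
proof (rule eq_vecI)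
  fix r assume "r < dim_vec (lin n (\<lambda>j. c j * a j) J u)"
  hence r: "r < n" by (simp add: lin_def)
  have uC: "j \<in> J \<Longrightarrow> u j \<in> carrier_vec n" for j using on J unfolding orthonormal_sys_def by auto
  have "(A *\<^sub>v lin n c J u) $ r = (\<Sum>t<n. A $$ (r,t) * (\<Sum>j\<in>J. c j * u j $ t))"
    using mult_vec_entry[OF A lin_carrier r] r by (simp add: lin_def)
  also have "\<dots> = (\<Sum>j\<in>J. c j * (\<Sum>t<n. A $$ (r,t) * u j $ t))"
    by (simp add: sum_distrib_left mult_ac sum.swap[of _ J])
  also have "\<dots> = (\<Sum>j\<in>J. c j * (a j * u j $ r))"
  proof (rule sum.cong[OF refl])
    fix j assume j: "j \<in> J"
    have "(\<Sum>t<n. A $$ (r,t) * u j $ t) = (A *\<^sub>v u j) $ r" using mult_vec_entry[OF A uC[OF j] r] by simp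
    also have "\<dots> = a j * u j $ r" using ev j J uC[OF j] r by auto
    finally show "c j * (\<Sum>t<n. A $$ (r,t) * u j $ t) = c j * (a j * u j $ r)" by simp
  qed
  finally show "(A *\<^sub>v lin n c J u) $ r = lin n (\<lambda>j. c j * a j) J u $ r" using r by (simp add: lin_def mult_ac)
qed (use A in \<open>simp add: lin_def\<close>)

lemma lin_quad:
  assumes A: "A \<in> carrier_mat n n" and on: "orthonormal_sys n u"
    and ev: "\<forall>j<n. A *\<^sub>v u j = a j \<cdot>\<^sub>v u j" and J: "J \<subseteq> {..<n}"
  shows "lin n c J u \<bullet> (A *\<^sub>v lin n c J u) = (\<Sum>j\<in>J. c j * (c j * a j))"
  unfolding lin_eig[OF A on ev J] lin_inner[OF on J] ..

definition emb :: "nat \<Rightarrow> nat \<Rightarrow> (nat \<Rightarrow> nat) \<Rightarrow> real vec \<Rightarrow> real vec" where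
  "emb n k f y = vec n (\<lambda>r. if r \<in> f ` {..<k} then y $ (the_inv_into {..<k} f r) else 0)"

lemma emb_carrier[simp]: "emb n k f y \<in> carrier_vec n" unfolding emb_def by simp

lemma emb_at:
  assumes f: "inj_on f {..<k}" "f ` {..<k} \<subseteq> {..<n}" and a: "a < k"
  shows "emb n k f y $ f a = y $ a"
proof -
  have "f a < n" using f a by auto
  thus ?thesis unfolding emb_def using a the_inv_into_f_f[OF f(1)] by auto
qed

lemma emb_sum:
  assumes f: "inj_on f {..<k}" "f ` {..<k} \<subseteq> {..<n}"
  shows "(\<Sum>r<n. emb n k f y $ r * g r) = (\<Sum>a<k. y $ a * g (f a))"
proof -
  have "(\<Sum>r<n. emb n k f y $ r * g r) = (\<Sum>r\<in>f ` {..<k}. emb n k f y $ r * g r)"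
    by (rule sum.mono_neutral_right) (use f in \<open>auto simp: emb_def\<close>)
  also have "\<dots> = (\<Sum>a<k. emb n k f y $ f a * g (f a))" by (rule sum.reindex[OF f(1), unfolded comp_def])
  also have "\<dots> = (\<Sum>a<k. y $ a * g (f a))" using emb_at[OF f] by simp
  finally show ?thesis .
qed

lemma emb_inner:
  assumes f: "inj_on f {..<k}" "f ` {..<k} \<subseteq> {..<n}" and y: "y \<in> carrier_vec k" and z: "z \<in> carrier_vec k"
  shows "emb n k f y \<bullet> emb n k f z = y \<bullet> z"
  using emb_sum[OF f, of y "\<lambda>r. emb n k f z $ r"] emb_at[OF f, of _ z]
  by (simp add: sprod_entry[of _ n] sprod_entry[OF y z])

lemma emb_quad:
  assumes A: "A \<in> carrier_mat n n" and f: "inj_on f {..<k}" "f ` {..<k} \<subseteq> {..<n}"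
    and B: "B = mat k k (\<lambda>(s,t). A $$ (f s, f t))" and y: "y \<in> carrier_vec k"
  shows "emb n k f y \<bullet> (A *\<^sub>v emb n k f y) = y \<bullet> (B *\<^sub>v y)"
proof -
  have BC: "B \<in> carrier_mat k k" using B by simp
  have "emb n k f y \<bullet> (A *\<^sub>v emb n k f y) = (\<Sum>r<n. emb n k f y $ r * (A *\<^sub>v emb n k f y) $ r)"
    by (rule sprod_entry) (use A in auto)
  also have "\<dots> = (\<Sum>a<k. y $ a * (A *\<^sub>v emb n k f y) $ f a)" by (rule emb_sum[OF f])
  also have "\<dots> = (\<Sum>a<k. y $ a * (B *\<^sub>v y) $ a)"
  proof (rule sum.cong[OF refl])
    fix a assume a: "a \<in> {..<k}"
    have fa: "f a < n" using f a by auto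
    have "(A *\<^sub>v emb n k f y) $ f a = (\<Sum>r<n. emb n k f y $ r * A $$ (f a, r))"
      using mult_vec_entry[OF A emb_carrier fa] by (simp add: mult.commute)
    also have "\<dots> = (\<Sum>b<k. y $ b * A $$ (f a, f b))" by (rule emb_sum[OF f])
    also have "\<dots> = (B *\<^sub>v y) $ a" using mult_vec_entry[OF BC y, of a] a B by (simp add: mult.commute)
    finally show "y $ a * (A *\<^sub>v emb n k f y) $ f a = y $ a * (B *\<^sub>v y) $ a" by simp
  qed
  also have "\<dots> = y \<bullet> (B *\<^sub>v y)" using BC y by (simp add: sprod_entry[of _ k])
  finally show ?thesis .
qed

lemma emb_lin:
  assumes f: "inj_on f {..<k}" "f ` {..<k} \<subseteq> {..<n}"
  shows "emb n k f (lin k d L w) = vec n (\<lambda>r. \<Sum>l\<in>L. d l * emb n k f (w l) $ r)"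
proof (rule eq_vecI)
  fix r assume "r < dim_vec (vec n (\<lambda>r. \<Sum>l\<in>L. d l * emb n k f (w l) $ r))"
  hence r: "r < n" by simp
  show "emb n k f (lin k d L w) $ r = vec n (\<lambda>r. \<Sum>l\<in>L. d l * emb n k f (w l) $ r) $ r"
  proof (cases "r \<in> f ` {..<k}")
    case True
    then obtain a where a: "a < k" "r = f a" by auto
    show ?thesis using r a emb_at[OF f a(1)] by (simp add: lin_def)
  next
    case False thus ?thesis using r by (simp add: emb_def)
  qed
qed simp

lemma dependent:
  assumes T: "finite T" "card T > n" and z: "\<And>t. t \<in> T \<Longrightarrow> z t \<in> carrier_vec n"
  shows "\<exists>g. (\<exists>t\<in>T. g t \<noteq> 0) \<and> (\<forall>r<n. (\<Sum>t\<in>T. g t * z t $ r) = (0::real))"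
proof -
  define N where "N = card T"
  obtain h where h: "bij_betw h {0..<N} T" using ex_bij_betw_nat_finite[OF T(1)] unfolding N_def by blast
  define M where "M = mat N N (\<lambda>(r,s). if r < n then z (h s) $ r else (0::real))"
  have MC: "M \<in> carrier_mat N N" unfolding M_def by simp
  have nN: "n < N" using T unfolding N_def by simp
  have "det M = 0"
  proof -
    have pz: "(\<Prod>i\<in>{0..<N}. M $$ (i, p i)) = 0" if p: "p permutes {0..<N}" for p
      by (rule prod_zero) (use nN p in \<open>auto intro!: bexI[of _ n] simp: M_def permutes_in_image\<close>)
    show ?thesis unfolding det_def using MC pz by (auto intro!: sum.neutral)
  qed
  then obtain v where v: "v \<in> carrier_vec N" "v \<noteq> 0\<^sub>v N" "M *\<^sub>v v = 0\<^sub>v N"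
    using det_0_iff_vec_prod_zero_field[OF MC] by blast
  obtain s0 where s0: "s0 < N" "v $ s0 \<noteq> 0" using v(1,2) by (metis eq_vecI index_zero_vec(1,2) carrier_vecD)
  define g where "g t = v $ (the_inv_into {0..<N} h t)" for t
  have gh: "g (h s) = v $ s" if "s < N" for s
    unfolding g_def using the_inv_into_f_f[OF bij_betw_imp_inj_on[OF h]] that by simp
  show ?thesis
  proof (intro exI[of _ g] conjI allI impI)
    show "\<exists>t\<in>T. g t \<noteq> 0" using s0 gh bij_betwE[OF h] by (metis atLeastLessThan_iff zero_le)
    fix r assume r: "r < n"
    have "(\<Sum>t\<in>T. g t * z t $ r) = (\<Sum>s\<in>{0..<N}. g (h s) * z (h s) $ r)"
      using sum.reindex[OF bij_betw_imp_inj_on[OF h]] bij_betw_imp_surj_on[OF h] by (metis (no_types, lifting) comp_apply sum.cong)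
    also have "\<dots> = (\<Sum>s<N. M $$ (r, s) * v $ s)"
      using gh r nN by (auto simp: M_def atLeast0LessThan mult.commute intro!: sum.cong)
    also have "\<dots> = (M *\<^sub>v v) $ r" using mult_vec_entry[OF MC v(1), of r] r nN by simp
    also have "\<dots> = 0" using v(3) r nN by simp
    finally show "(\<Sum>t\<in>T. g t * z t $ r) = 0" .
  qed
qed

lemma interlace_core:
  assumes A: "A \<in> carrier_mat n n" and f: "inj_on f {..<k}" "f ` {..<k} \<subseteq> {..<n}"
  and B: "B = mat k k (\<lambda>(s,t). A $$ (f s, f t))"
  and onu: "orthonormal_sys n u" and evu: "\<forall>j<n. A *\<^sub>v u j = a j \<cdot>\<^sub>v u j"
  and onw: "orthonormal_sys k w" and evw: "\<forall>j<k. B *\<^sub>v w j = b j \<cdot>\<^sub>v w j"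
  and J: "J \<subseteq> {..<n}" and L: "L \<subseteq> {..<k}" and card: "card J + card L > n"
  shows "\<exists>c d. (\<Sum>j\<in>J. c j * c j) > 0 \<and> (\<Sum>j\<in>J. c j * c j) = (\<Sum>l\<in>L. d l * d l)
     \<and> (\<Sum>j\<in>J. c j * (c j * a j)) = (\<Sum>l\<in>L. d l * (d l * b l))"
proof -
  have finJ: "finite J" using J finite_subset by blast
  have finL: "finite L" using L finite_subset by blast
  have BC: "B \<in> carrier_mat k k" using B by simp
  define T :: "(nat + nat) set" where "T = Inl ` J \<union> Inr ` L"
  have finT: "finite T" unfolding T_def using finJ finL by simp
  have cardT: "card T = card J + card L" unfolding T_def
    by (subst card_Un_disjoint) (use finJ finL in \<open>auto simp: card_image\<close>)
  define z where "z t = (case t of Inl j \<Rightarrow> u j | Inr l \<Rightarrow> emb n k f (w l))" for t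
  have zC: "z t \<in> carrier_vec n" if "t \<in> T" for t
    using that onu J unfolding T_def z_def orthonormal_sys_def by auto
  obtain g where g1: "\<exists>t\<in>T. g t \<noteq> 0" and g2: "\<forall>r<n. (\<Sum>t\<in>T. g t * z t $ r) = 0"
    using dependent[of T n z, OF finT _ zC] card cardT by auto
  define c where "c j = g (Inl j)" for j
  define d where "d l = - g (Inr l)" for l
  define x where "x = lin n c J u"
  define y where "y = lin k d L w"
  have split: "(\<Sum>t\<in>T. g t * z t $ r) = (\<Sum>j\<in>J. c j * u j $ r) - (\<Sum>l\<in>L. d l * emb n k f (w l) $ r)" for r
  proof -
    have "(\<Sum>t\<in>T. g t * z t $ r) = (\<Sum>t\<in>Inl ` J. g t * z t $ r) + (\<Sum>t\<in>Inr ` L. g t * z t $ r)"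
      unfolding T_def by (rule sum.union_disjoint) (use finJ finL in auto)
    also have "(\<Sum>t\<in>Inl ` J. g t * z t $ r) = (\<Sum>j\<in>J. c j * u j $ r)"
      by (subst sum.reindex) (auto simp: c_def z_def)
    also have "(\<Sum>t\<in>Inr ` L. g t * z t $ r) = - (\<Sum>l\<in>L. d l * emb n k f (w l) $ r)"
      by (subst sum.reindex) (auto simp: d_def z_def sum_negf[symmetric])
    finally show ?thesis by simp
  qed
  have xy: "x = emb n k f y"
  proof (rule eq_vecI)
    fix r assume "r < dim_vec (emb n k f y)"
    hence r: "r < n" by (simp add: emb_def)
    have "x $ r = (\<Sum>j\<in>J. c j * u j $ r)" using r by (simp add: x_def lin_def)
    also have "\<dots> = (\<Sum>l\<in>L. d l * emb n k f (w l) $ r)" using g2 r split by simp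
    also have "\<dots> = emb n k f y $ r" unfolding y_def emb_lin[OF f] using r by simp
    finally show "x $ r = emb n k f y $ r" .
  qed (simp add: x_def lin_def emb_def)
  have xx: "x \<bullet> x = (\<Sum>j\<in>J. c j * c j)" unfolding x_def by (rule lin_inner[OF onu J])
  have yy: "y \<bullet> y = (\<Sum>l\<in>L. d l * d l)" unfolding y_def by (rule lin_inner[OF onw L])
  have eqn: "(\<Sum>j\<in>J. c j * c j) = (\<Sum>l\<in>L. d l * d l)"
    using xx yy emb_inner[OF f, of y y] xy by (simp add: y_def)
  have qx: "x \<bullet> (A *\<^sub>v x) = (\<Sum>j\<in>J. c j * (c j * a j))" unfolding x_def by (rule lin_quad[OF A onu evu J])
  have qy: "y \<bullet> (B *\<^sub>v y) = (\<Sum>l\<in>L. d l * (d l * b l))" unfolding y_def by (rule lin_quad[OF BC onw evw L])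
  have qeq: "(\<Sum>j\<in>J. c j * (c j * a j)) = (\<Sum>l\<in>L. d l * (d l * b l))"
    using qx qy emb_quad[OF A f B, of y] xy by (simp add: y_def)
  have pos: "(\<Sum>j\<in>J. c j * c j) > 0"
  proof (rule ccontr)
    assume "\<not> ?thesis"
    hence z1: "(\<Sum>j\<in>J. c j * c j) = 0" using sum_nonneg[of J "\<lambda>j. c j * c j"] by force
    hence c0: "\<forall>j\<in>J. c j = 0" using sum_nonneg_eq_0_iff[OF finJ, of "\<lambda>j. c j * c j"] by simp
    have "(\<Sum>l\<in>L. d l * d l) = 0" using z1 eqn by simp
    hence d0: "\<forall>l\<in>L. d l = 0" using sum_nonneg_eq_0_iff[OF finL, of "\<lambda>l. d l * d l"] by simp
    from g1 obtain t where t: "t \<in> T" "g t \<noteq> 0" by blast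
    show False using t c0 d0 unfolding T_def c_def d_def by auto
  qed
  show ?thesis using pos eqn qeq by blast
qed

lemma wsum_le:
  assumes "\<And>j. j \<in> J \<Longrightarrow> a j \<le> m"
  shows "(\<Sum>j\<in>J. c j * (c j * a j)) \<le> m * (\<Sum>j\<in>J. c j * (c j :: real))"
  unfolding sum_distrib_left
proof (rule sum_mono)
  fix j assume "j \<in> J"
  hence "a j \<le> m" using assms by blast
  hence "a j * (c j * c j) \<le> m * (c j * c j)" by (rule mult_right_mono) simp
  thus "c j * (c j * a j) \<le> m * (c j * c j)" by (simp add: mult_ac)
qed

lemma wsum_ge:
  assumes "\<And>j. j \<in> J \<Longrightarrow> m \<le> a j"
  shows "m * (\<Sum>j\<in>J. c j * (c j :: real)) \<le> (\<Sum>j\<in>J. c j * (c j * a j))"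
  unfolding sum_distrib_left
proof (rule sum_mono)
  fix j assume "j \<in> J"
  hence "m \<le> a j" using assms by blast
  hence "m * (c j * c j) \<le> a j * (c j * c j)" by (rule mult_right_mono) simp
  thus "m * (c j * c j) \<le> c j * (c j * a j)" by (simp add: mult_ac)
qed

lemma interlace:
  assumes S: "symm A n" and f: "inj_on f {..<k}" "f ` {..<k} \<subseteq> {..<n}"
  and B: "B = mat k k (\<lambda>(s,t). A $$ (f s, f t))" and i: "i < k"
  shows "eigs B ! i \<le> eigs A ! i \<and> eigs A ! (n - k + i) \<le> eigs B ! i"
proof -
  have A: "A \<in> carrier_mat n n" using S unfolding symm_def by simp
  have kn: "k \<le> n" using card_inj_on_le[OF f] by simp
  have SB: "symm B k" using S f unfolding symm_def B by auto
  obtain u where onu: "orthonormal_sys n u" and evu: "\<forall>j<n. A *\<^sub>v u j = eigs A ! j \<cdot>\<^sub>v u j"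
    and sa: "\<And>j l. j \<le> l \<Longrightarrow> l < n \<Longrightarrow> eigs A ! l \<le> eigs A ! j"
    using spectral_sorted[OF S] by blast
  obtain w where onw: "orthonormal_sys k w" and evw: "\<forall>j<k. B *\<^sub>v w j = eigs B ! j \<cdot>\<^sub>v w j"
    and sb: "\<And>j l. j \<le> l \<Longrightarrow> l < k \<Longrightarrow> eigs B ! l \<le> eigs B ! j"
    using spectral_sorted[OF SB] by blast
  note core = interlace_core[OF A f B onu evu onw evw]
  have 1: "eigs B ! i \<le> eigs A ! i"
  proof -
    obtain c d where pos: "(\<Sum>j\<in>{i..<n}. c j * c j) > 0"
      and eqn: "(\<Sum>j\<in>{i..<n}. c j * c j) = (\<Sum>l\<in>{..i}. d l * d l)"
      and qeq: "(\<Sum>j\<in>{i..<n}. c j * (c j * eigs A ! j)) = (\<Sum>l\<in>{..i}. d l * (d l * eigs B ! l))"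
      using core[of "{i..<n}" "{..i}"] i kn by (auto simp: subset_eq)
    have "(\<Sum>j\<in>{i..<n}. c j * (c j * eigs A ! j)) \<le> eigs A ! i * (\<Sum>j\<in>{i..<n}. c j * c j)"
      by (rule wsum_le) (use sa in auto)
    moreover have "eigs B ! i * (\<Sum>l\<in>{..i}. d l * d l) \<le> (\<Sum>l\<in>{..i}. d l * (d l * eigs B ! l))"
      by (rule wsum_ge) (use sb i in auto)
    ultimately have "eigs B ! i * (\<Sum>j\<in>{i..<n}. c j * c j) \<le> eigs A ! i * (\<Sum>j\<in>{i..<n}. c j * c j)"
      using eqn qeq by simp
    thus ?thesis using pos by simp
  qed
  have 2: "eigs A ! (n - k + i) \<le> eigs B ! i"
  proof -
    have h1: "{..n - k + i} \<subseteq> {..<n}" using i kn by auto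
    have h2: "{i..<k} \<subseteq> {..<k}" by auto
    have h3: "card {..n - k + i} + card {i..<k} > n" using i kn by simp
    obtain c d where pos: "(\<Sum>j\<in>{..n - k + i}. c j * c j) > 0"
      and eqn: "(\<Sum>j\<in>{..n - k + i}. c j * c j) = (\<Sum>l\<in>{i..<k}. d l * d l)"
      and qeq: "(\<Sum>j\<in>{..n - k + i}. c j * (c j * eigs A ! j)) = (\<Sum>l\<in>{i..<k}. d l * (d l * eigs B ! l))"
      using core[OF h1 h2 h3] by blast
    have "eigs A ! (n - k + i) * (\<Sum>j\<in>{..n - k + i}. c j * c j) \<le> (\<Sum>j\<in>{..n - k + i}. c j * (c j * eigs A ! j))"
      by (rule wsum_ge) (use sa i kn in auto)
    moreover have "(\<Sum>l\<in>{i..<k}. d l * (d l * eigs B ! l)) \<le> eigs B ! i * (\<Sum>l\<in>{i..<k}. d l * d l)"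
      by (rule wsum_le) (use sb in auto)
    ultimately have "eigs A ! (n - k + i) * (\<Sum>j\<in>{..n - k + i}. c j * c j) \<le> eigs B ! i * (\<Sum>j\<in>{..n - k + i}. c j * c j)"
      using eqn qeq by simp
    thus ?thesis using pos by simp
  qed
  show ?thesis using 1 2 by simp
qed


lemma connected_ext:
  assumes c: "connected_on E S" and x: "x \<in> S" and e: "{x, w} \<in> E"
  shows "connected_on E (insert w S)"
proof -
  let ?R = "\<lambda>S. {(u, v). u \<in> S \<and> v \<in> S \<and> {u, v} \<in> E}"
  have mono: "(?R S)\<^sup>* \<subseteq> (?R (insert w S))\<^sup>*" by (rule rtrancl_mono) auto
  have xw: "(x, w) \<in> ?R (insert w S)" using x e by auto
  have wx: "(w, x) \<in> ?R (insert w S)" using x e by (auto simp: insert_commute)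
  have inS: "(p, q) \<in> (?R (insert w S))\<^sup>*" if "p \<in> S" "q \<in> S" for p q
    using c that mono unfolding connected_on_def by blast
  show ?thesis unfolding connected_on_def
  proof (intro conjI ballI)
    fix p q assume p: "p \<in> insert w S" and q: "q \<in> insert w S"
    show "(p, q) \<in> (?R (insert w S))\<^sup>*"
    proof (cases "p = w")
      case True
      show ?thesis
      proof (cases "q = w")
        case True thus ?thesis using \<open>p = w\<close> by simp
      next
        case False
        hence "q \<in> S" using q by simp
        thus ?thesis using True converse_rtrancl_into_rtrancl[OF wx inS[OF x]] by simp
      qed
    next
      case False
      hence pS: "p \<in> S" using p by simp
      show ?thesis
      proof (cases "q = w")
        case True thus ?thesis using rtrancl_into_rtrancl[OF inS[OF pS x] xw] by simp
      next
        case False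
        hence "q \<in> S" using q by simp
        thus ?thesis using inS[OF pS] by simp
      qed
    qed
  qed simp
qed

lemma block_absorb:
  assumes B: "is_block V E B" and G: "simple_graph V E" and a: "a \<in> B" and b: "b \<in> B" and ab: "a \<noteq> b"
    and aw: "{a, w} \<in> E" and bw: "{b, w} \<in> E"
  shows "w \<in> B"
proof (rule ccontr)
  assume w: "w \<notin> B"
  have wV: "w \<in> V" using G aw unfolding simple_graph_def by auto
  have BV: "B \<subseteq> V" and cB: "connected_on E B" and ncB: "no_cut_vertex E B"
    and maxB: "\<And>T. B \<subset> T \<Longrightarrow> T \<subseteq> V \<Longrightarrow> \<not> (connected_on E T \<and> no_cut_vertex E T)"
    using B unfolding is_block_def by auto
  have c1: "connected_on E (insert w B)" by (rule connected_ext[OF cB a aw])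
  have c2: "no_cut_vertex E (insert w B)"
    unfolding no_cut_vertex_def
  proof (intro ballI impI)
    fix x assume x: "x \<in> insert w B" and ne: "insert w B - {x} \<noteq> {}"
    show "connected_on E (insert w B - {x})"
    proof (cases "x = w")
      case True
      hence "insert w B - {x} = B" using w by auto
      thus ?thesis using cB by simp
    next
      case False
      hence xB: "x \<in> B" using x by simp
      define y where "y = (if x = a then b else a)"
      have y: "y \<in> B - {x}" using a b ab unfolding y_def by auto
      have yw: "{y, w} \<in> E" using aw bw unfolding y_def by auto
      have "connected_on E (B - {x})" using ncB xB y unfolding no_cut_vertex_def by auto
      from connected_ext[OF this y yw] show ?thesis using False by (simp add: insert_Diff_if)
    qed
  qed
  have "B \<subset> insert w B" using w by auto
  moreover have "insert w B \<subseteq> V" using BV wV by auto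
  ultimately show False using maxB c1 c2 by blast
qed

lemma tri_sub:
  assumes G: "simple_graph V E" and Bs: "\<forall>B\<in>Bs. is_block V E B"
    and H4: "{e \<in> E. \<exists>B\<in>Bs. e \<subseteq> B} = induced_edges E (\<Union>Bs)"
    and ab: "{a, b} \<in> induced_edges E (\<Union>Bs)" "a \<noteq> b"
    and t: "is_triangle E t" "a \<in> t" "b \<in> t"
  shows "is_triangle (induced_edges E (\<Union>Bs)) t"
proof -
  obtain B where B: "B \<in> Bs" "a \<in> B" "b \<in> B" using ab(1) H4[symmetric] by auto
  have blk: "is_block V E B" using Bs B by auto
  have tB: "t \<subseteq> B"
  proof
    fix x assume x: "x \<in> t"
    show "x \<in> B"
    proof (cases "x = a \<or> x = b")
      case True thus ?thesis using B by auto
    next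
      case False
      have "{a, x} \<in> E" "{b, x} \<in> E" using t x False unfolding is_triangle_def by auto
      thus ?thesis using block_absorb[OF blk G B(2,3) ab(2)] by auto
    qed
  qed
  show ?thesis using t(1) tB B(1) unfolding is_triangle_def induced_edges_def by blast
qed

lemma tri_mono: "E' \<subseteq> E \<Longrightarrow> is_triangle E' t \<Longrightarrow> is_triangle E t"
  unfolding is_triangle_def by blast

lemma helm_entry_sub:
  assumes G: "simple_graph V E" and Bs: "\<forall>B\<in>Bs. is_block V E B"
    and H4: "{e \<in> E. \<exists>B\<in>Bs. e \<subseteq> B} = induced_edges E (\<Union>Bs)"
    and e: "e \<in> oriented_edges (induced_edges E (\<Union>Bs))"
  shows "helm_entry (induced_edges E (\<Union>Bs)) e e' = helm_entry E e e'"
proof -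
  let ?E' = "induced_edges E (\<Union>Bs)"
  have sub: "?E' \<subseteq> E" unfolding induced_edges_def by auto
  obtain a b where ab: "e = (a, b)" "{a, b} \<in> ?E'" "a < b" using e unfolding oriented_edges_def by auto
  have iff: "is_triangle ?E' t \<longleftrightarrow> is_triangle E t" if "a \<in> t" "b \<in> t" for t
    using tri_sub[OF G Bs H4 ab(2) _ _ that] tri_mono[OF sub] ab(3) by auto
  have tc: "tri_count ?E' e = tri_count E e"
  proof -
    have "{t. is_triangle ?E' t \<and> fst e \<in> t \<and> snd e \<in> t} = {t. is_triangle E t \<and> fst e \<in> t \<and> snd e \<in> t}"
      using iff ab(1) by auto
    thus ?thesis unfolding tri_count_def by simp
  qed
  have ict: "in_common_triangle ?E' e e'' = in_common_triangle E e e''" for e''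
    unfolding in_common_triangle_def ab(1) using iff by auto
  show ?thesis unfolding helm_entry_def tc ict ..
qed

lemma helm_entry_sym: "helm_entry E e e' = helm_entry E e' e"
proof -
  have ics: "in_common_triangle E e e' = in_common_triangle E e' e"
    unfolding in_common_triangle_def by blast
  have c1: "(snd e = fst e' \<or> snd e' = fst e) = (snd e' = fst e \<or> snd e = fst e')" by blast
  have c2: "(snd e = snd e' \<or> fst e = fst e') = (snd e' = snd e \<or> fst e' = fst e)" by auto
  have c3: "(e = e') = (e' = e)" by auto
  show ?thesis unfolding helm_entry_def c1 c2 c3 ics by simp
qed

lemma oriented_card:
  assumes G: "simple_graph V E" and sub: "E' \<subseteq> E"
  shows "finite (oriented_edges E')" "card (oriented_edges E') = card E'"
proof -
  have finE: "finite E'"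
  proof -
    have "E' \<subseteq> Pow V" using G sub unfolding simple_graph_def by auto
    thus ?thesis using G unfolding simple_graph_def by (meson finite_Pow_iff finite_subset)
  qed
  have bij: "bij_betw (\<lambda>(u,v). {u,v}) (oriented_edges E') E'"
    unfolding bij_betw_def
  proof
    show "inj_on (\<lambda>(u,v). {u,v}) (oriented_edges E')"
      unfolding inj_on_def oriented_edges_def by (auto simp: doubleton_eq_iff)
    show "(\<lambda>(u,v). {u,v}) ` oriented_edges E' = E'"
    proof
      show "(\<lambda>(u,v). {u,v}) ` oriented_edges E' \<subseteq> E'" unfolding oriented_edges_def by auto
      show "E' \<subseteq> (\<lambda>(u,v). {u,v}) ` oriented_edges E'"
      proof
        fix e assume e: "e \<in> E'"
        hence "card e = 2" using G sub unfolding simple_graph_def by auto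
        then obtain x y where xy: "e = {x, y}" "x \<noteq> y" by (auto simp: card_2_iff)
        show "e \<in> (\<lambda>(u,v). {u,v}) ` oriented_edges E'"
        proof (cases "x < y")
          case True
          thus ?thesis using e xy unfolding oriented_edges_def by (auto intro!: image_eqI[of _ _ "(x,y)"])
        next
          case False
          hence "y < x" using xy(2) by auto
          thus ?thesis using e xy unfolding oriented_edges_def
            by (auto intro!: image_eqI[of _ _ "(y,x)"] simp: insert_commute)
        qed
      qed
    qed
  qed
  show "finite (oriented_edges E')" using bij_betw_finite[OF bij] finE by simp
  show "card (oriented_edges E') = card E'" using bij_betw_same_card[OF bij] .
qed

theorem corollary4p5:
  fixes V :: "'a::linorder set" and E :: "'a set set" and Bs :: "'a set set" and i :: nat
  assumes "simple_graph V E"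
    and "card E \<ge> 1"
    and "\<forall>B\<in>Bs. is_block V E B"
    and "{e \<in> E. \<exists>B\<in>Bs. e \<subseteq> B} = induced_edges E (\<Union>Bs)"
    and "card (induced_edges E (\<Union>Bs)) \<ge> 1"
    and "1 \<le> i" and "i \<le> card (induced_edges E (\<Union>Bs))"
  shows "helm_lambda E i \<ge> helm_lambda (induced_edges E (\<Union>Bs)) i \<and>
         helm_lambda (induced_edges E (\<Union>Bs)) i
           \<ge> helm_lambda E (card E - card (induced_edges E (\<Union>Bs)) + i)"
proof -
  note G = assms(1) and Bs = assms(3) and H4 = assms(4)
  let ?E' = "induced_edges E (\<Union>Bs)"
  have sub: "?E' \<subseteq> E" by (auto simp: induced_edges_def)
  define es where "es = edge_list E"
  define es' where "es' = edge_list ?E'"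
  define n where "n = length es"
  define k where "k = length es'"
  have fo: "finite (oriented_edges E)" "card (oriented_edges E) = card E"
    using oriented_card[OF G order_refl] by auto
  have fo': "finite (oriented_edges ?E')" "card (oriented_edges ?E') = card ?E'"
    using oriented_card[OF G sub] by auto
  have n: "n = card E" unfolding n_def es_def edge_list_def using fo by simp
  have k: "k = card ?E'" unfolding k_def es'_def edge_list_def using fo' by simp
  have ses: "set es = oriented_edges E" "distinct es" unfolding es_def edge_list_def using fo by auto
  have ses': "set es' = oriented_edges ?E'" "distinct es'" unfolding es'_def edge_list_def using fo' by auto
  have osub: "oriented_edges ?E' \<subseteq> oriented_edges E" using sub unfolding oriented_edges_def by auto
  define H where "H = helmholtzian E"
  have H: "H = mat n n (\<lambda>(i,j). helm_entry E (es!i) (es!j))"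
    unfolding H_def helmholtzian_def es_def n_def Let_def ..
  have SH: "symm H n" unfolding symm_def H using helm_entry_sym[of E] by simp
  define f where "f s = (SOME j. j < n \<and> es ! j = es' ! s)" for s
  have f1: "f s < n \<and> es ! (f s) = es' ! s" if s: "s < k" for s
  proof -
    have "es' ! s \<in> set es" using ses ses' osub s unfolding k_def by auto
    hence "\<exists>j. j < n \<and> es ! j = es' ! s" unfolding n_def by (metis in_set_conv_nth)
    thus ?thesis unfolding f_def by (rule someI_ex)
  qed
  have finj: "inj_on f {..<k}"
  proof (rule inj_onI)
    fix s s' assume "s \<in> {..<k}" "s' \<in> {..<k}" "f s = f s'"
    hence "es' ! s = es' ! s'" "s < k" "s' < k" using f1 by auto metis
    thus "s = s'" using ses'(2) nth_eq_iff_index_eq unfolding k_def by blast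
  qed
  have fimg: "f ` {..<k} \<subseteq> {..<n}" using f1 by auto
  have H': "helmholtzian ?E' = mat k k (\<lambda>(s,t). H $$ (f s, f t))"
  proof (rule eq_matI)
    fix s t assume "s < dim_row (mat k k (\<lambda>(s,t). H $$ (f s, f t)))" "t < dim_col (mat k k (\<lambda>(s,t). H $$ (f s, f t)))"
    hence s: "s < k" and t: "t < k" by auto
    have e: "es' ! s \<in> oriented_edges ?E'" using ses'(1) s unfolding k_def by auto
    have "helmholtzian ?E' $$ (s,t) = helm_entry ?E' (es' ! s) (es' ! t)"
      unfolding helmholtzian_def Let_def es'_def[symmetric] using s t unfolding k_def by simp
    also have "\<dots> = helm_entry E (es' ! s) (es' ! t)" by (rule helm_entry_sub[OF G Bs H4 e])
    also have "\<dots> = H $$ (f s, f t)" using f1[OF s] f1[OF t] unfolding H by simp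
    finally show "helmholtzian ?E' $$ (s,t) = mat k k (\<lambda>(s,t). H $$ (f s, f t)) $$ (s,t)" using s t by simp
  qed (auto simp: helmholtzian_def Let_def es'_def[symmetric] k_def)
  have i': "i - 1 < k" using assms(6,7) k by simp
  have lam: "helm_lambda X j = eigs (helmholtzian X) ! (j - 1)" for X :: "'a set set" and j
    unfolding helm_lambda_def eigs_desc_def eigs_def ..
  have idx: "card E - card ?E' + i - 1 = n - k + (i - 1)" using assms(6) n k by simp
  show ?thesis using interlace[OF SH finj fimg H' i'] unfolding lam idx H_def by simp
qed

end
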